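(* Fix $C\ge0$. For $0\le k\le n$ put $N=n-k$ and \[ T_k=\sum_{g\in\mathcal M(k)}\Bigl|\sum_{h\in\mathcal M(N)}\psi(Q_A(gh))\Bigr|. \] Then as $n\to\infty$, uniformly for $0\le k\le 9n/20+C$, $T_k\ll_A q^{19n/20+o(n)}$.
   Context: $q$ is a fixed odd prime power; fix $m\ge0$ and $c_0,\dots,c_m\in\mathbb F_q$ with $c_m\ne0$. For each $n$, $\ell_n$ is an arbitrary linear form in the coefficients $f_0,\dots,f_n$ and for $f=\sum_{i=0}^nf_it^i$ of degree $n$, $Q_A(f)=\sum_{j=0}^m c_j\sum_{i=j}^n f_if_{i-j}+\ell_n(f)$. $\mathcal M(k)$ is the set of monic polynomials of degree $k$ in $\mathbb F_q[t]$, $\psi$ a non-trivial additive character of $\mathbb F_q$. Implied constants depend only on $q$, $C$ and $c_0,\dots,c_m$ and are uniform in $\ell_n,\psi$; $q^{o(n)}$ is a factor $q^{\varepsilon(n)n}$ with $\varepsilon(n)\to0$. *)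

theory Defs
  imports "HOL-Analysis.Analysis" "HOL-Computational_Algebra.Polynomial"
begin

definition monics :: "nat \<Rightarrow> ('a::field) poly set" where
  "monics k = {p. degree p = k \<and> lead_coeff p = 1}"

definition nontriv_add_char :: "('a::field \<Rightarrow> complex) \<Rightarrow> bool" where
  "nontriv_add_char \<psi> \<longleftrightarrow> (\<forall>x y. \<psi> (x + y) = \<psi> x * \<psi> y) \<and> (\<exists>x. \<psi> x \<noteq> 1)"

text \<open>The quadratic form Q_A: for f of degree n,
  sum_{j=0}^m c_j sum_{i=j}^n f_i f_{i-j} + l_n(f), where the linear form l_n
  is given by its coefficient vector l n 0, ..., l n n.\<close>
definition QA :: "nat \<Rightarrow> (nat \<Rightarrow> 'a::field) \<Rightarrow> (nat \<Rightarrow> nat \<Rightarrow> 'a) \<Rightarrow> 'a poly \<Rightarrow> 'a" where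
  "QA m c l f = (let n = degree f in
     (\<Sum>j\<le>m. c j * (\<Sum>i=j..n. coeff f i * coeff f (i - j))) + (\<Sum>i\<le>n. l n i * coeff f i))"

definition Tk :: "nat \<Rightarrow> (nat \<Rightarrow> 'a::field) \<Rightarrow> (nat \<Rightarrow> nat \<Rightarrow> 'a) \<Rightarrow> ('a \<Rightarrow> complex)
                   \<Rightarrow> nat \<Rightarrow> nat \<Rightarrow> real" where
  "Tk m c l \<psi> n k = (\<Sum>g\<in>monics k. norm (\<Sum>h\<in>monics (n - k). \<psi> (QA m c l (g * h))))"

end

theory Submission
  imports Defs
begin

lemma even_card_closed:
  assumes two: "(2::'a::field) = 0"
  shows "finite S \<Longrightarrow> (\<forall>x\<in>S. x + 1 \<in> S) \<Longrightarrow> even (card (S::'a set))"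
proof (induction "card S" arbitrary: S rule: less_induct)
  case less
  show ?case
  proof (cases "S = {}")
    case True thus ?thesis by simp
  next
    case False
    then obtain x where x: "x \<in> S" by blast
    have x1: "x + 1 \<in> S" using less.prems x by blast
    have ne: "x + 1 \<noteq> x" by simp
    have bk: "y + 1 + 1 = y" for y :: "'a"
    proof -
      have "y + 1 + 1 = y + 2" by (simp add: add.assoc)
      thus ?thesis using two by simp
    qed
    define S' where "S' = S - {x, x + 1}"
    have fin: "finite S'" using less.prems unfolding S'_def by auto
    have cl: "\<forall>y\<in>S'. y + 1 \<in> S'"
    proof
      fix y assume y: "y \<in> S'"
      have "y + 1 \<in> S" using y less.prems unfolding S'_def by blast
      moreover have "y + 1 \<noteq> x"
      proof
        assume "y + 1 = x"
        hence "y = x + 1" using bk[of y] by simp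
        thus False using y unfolding S'_def by simp
      qed
      moreover have "y + 1 \<noteq> x + 1" using y unfolding S'_def by auto
      ultimately show "y + 1 \<in> S'" unfolding S'_def by auto
    qed
    have cS: "card S' = card S - 2" unfolding S'_def using x x1 ne less.prems
      by (subst card_Diff_subset) auto
    have "card S \<ge> 2"
    proof -
      have "{x, x+1} \<subseteq> S" using x x1 by auto
      hence "card {x, x+1} \<le> card S" using less.prems by (intro card_mono) auto
      thus ?thesis using ne by simp
    qed
    hence "card S' < card S" using cS by simp
    hence "even (card S')" using less.hyps fin cl by blast
    moreover have "card S = card S' + 2" using cS \<open>card S \<ge> 2\<close> by simp
    ultimately show ?thesis by simp
  qed
qed

lemma two_nz:
  assumes "odd CARD('a::{finite,field})" shows "(2::'a) \<noteq> 0"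
  using even_card_closed[where 'a='a, of UNIV] assms by auto

lemma psi_pow:
  assumes "nontriv_add_char (\<psi>::'a::field \<Rightarrow> complex)"
  shows "\<psi> (of_nat n * a) = \<psi> 0 * \<psi> a ^ n"
proof (induction n)
  case 0 then show ?case by simp
next
  case (Suc n)
  have "\<psi> (of_nat (Suc n) * a) = \<psi> (of_nat n * a + a)" by (simp add: algebra_simps)
  also have "\<dots> = \<psi> (of_nat n * a) * \<psi> a" using assms unfolding nontriv_add_char_def by blast
  finally show ?case using Suc by simp
qed

lemma psi_props:
  assumes "nontriv_add_char (\<psi>::'a::{finite,field} \<Rightarrow> complex)" and "\<psi> 0 = 1"
  shows "norm (\<psi> a) = 1" and "cnj (\<psi> a) = \<psi> (- a)" and "\<psi> (x + y) = \<psi> x * \<psi> y"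
proof -
  show add: "\<psi> (x + y) = \<psi> x * \<psi> y" for x y using assms unfolding nontriv_add_char_def by blast
  have "CHAR('a) > 0" by (simp add: finite_imp_CHAR_pos)
  have "\<psi> a ^ CHAR('a) = 1" using psi_pow[OF assms(1), of "CHAR('a)" a] assms(2) by simp
  hence "norm (\<psi> a) ^ CHAR('a) = 1" by (metis norm_one norm_power)
  thus n1: "norm (\<psi> a) = 1" using \<open>CHAR('a) > 0\<close>
    using power_eq_imp_eq_base[of "norm (\<psi> a)" "CHAR('a)" 1] by simp
  have "\<psi> a * \<psi> (- a) = 1" using add[of a "-a"] assms(2) by simp
  moreover have "\<psi> a * cnj (\<psi> a) = 1"
    using complex_norm_square[of "\<psi> a"] n1 by simp
  moreover have "\<psi> a \<noteq> 0" using n1 by auto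
  ultimately show "cnj (\<psi> a) = \<psi> (- a)"
    by (metis mult_left_cancel)
qed

definition Pset :: "nat \<Rightarrow> 'a::zero poly set" where "Pset N = {x. \<forall>i\<ge>N. coeff x i = 0}"
definition Q0 :: "nat \<Rightarrow> (nat \<Rightarrow> 'a::comm_ring_1) \<Rightarrow> nat \<Rightarrow> 'a poly \<Rightarrow> 'a" where
  "Q0 m c n f = (\<Sum>j\<le>m. c j * (\<Sum>i=j..n. coeff f i * coeff f (i - j)))"
definition Lf :: "(nat \<Rightarrow> nat \<Rightarrow> 'a::comm_ring_1) \<Rightarrow> nat \<Rightarrow> 'a poly \<Rightarrow> 'a" where
  "Lf l n f = (\<Sum>i\<le>n. l n i * coeff f i)"
definition Bp :: "nat \<Rightarrow> (nat \<Rightarrow> 'a::comm_ring_1) \<Rightarrow> 'a poly" where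
  "Bp m c = (\<Sum>j\<le>m. smult (c j) (monom 1 (m - j) + monom 1 (m + j)))"
definition Xf :: "nat \<Rightarrow> (nat \<Rightarrow> 'a::comm_ring_1) \<Rightarrow> nat \<Rightarrow> 'a poly \<Rightarrow> 'a poly \<Rightarrow> 'a" where
  "Xf m c n u v = (\<Sum>i\<le>n. coeff u i * coeff (Bp m c * v) (i + m))"

lemma QA_split: "degree f = n \<Longrightarrow> QA m c l f = Q0 m c n f + Lf l n f"
  unfolding QA_def Q0_def Lf_def Let_def by simp

lemma coeff_Bp_mult:
  "coeff (Bp m c * v) (i + m) = (\<Sum>j\<le>m. c j * ((if j \<le> i then coeff v (i - j) else 0) + coeff v (i + j)))"
proof -
  have "Bp m c * v = (\<Sum>j\<le>m. smult (c j) (monom 1 (m - j) * v + monom 1 (m + j) * v))"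
    unfolding Bp_def sum_distrib_right by (simp add: distrib_right)
  hence "coeff (Bp m c * v) (i + m) = (\<Sum>j\<le>m. c j * (coeff (monom 1 (m - j) * v) (i + m) + coeff (monom 1 (m + j) * v) (i + m)))"
    by (simp add: coeff_sum)
  also have "\<dots> = (\<Sum>j\<le>m. c j * ((if j \<le> i then coeff v (i - j) else 0) + coeff v (i + j)))"
    by (intro sum.cong refl) (auto simp: coeff_monom_mult add.commute)
  finally show ?thesis .
qed

lemma aux1: fixes j n :: nat shows "(\<Sum>i=j..n. (a i :: 'a::comm_ring_1)) = (\<Sum>i\<le>n. if j \<le> i then a i else 0)"
proof -
  have "{i \<in> {..n}. j \<le> i} = {j..n}" by auto
  moreover have "(\<Sum>i\<le>n. if j \<le> i then a i else 0) = sum a {i \<in> {..n}. j \<le> i}"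
    by (rule sum.inter_filter[symmetric]) simp
  ultimately show ?thesis by simp
qed

lemma aux2:
  fixes b :: "nat \<Rightarrow> 'a::comm_ring_1"
  assumes "\<forall>s>n. b s = 0"
  shows "(\<Sum>i=j..n. b i * a (i - j)) = (\<Sum>i\<le>n. a i * b (i+j))"
proof (cases "j \<le> n")
  case True
  have "(\<Sum>i=j..n. b i * a (i - j)) = (\<Sum>i=0+j..(n-j)+j. b i * a (i - j))" using True by simp
  also have "\<dots> = (\<Sum>i=0..n-j. b (i+j) * a i)"
    by (subst sum.shift_bounds_cl_nat_ivl) simp
  also have "\<dots> = (\<Sum>i\<le>n. a i * b (i+j))"
    by (rule sum.mono_neutral_cong_left) (use assms in \<open>auto simp: mult.commute\<close>)
  finally show ?thesis .
next
  case False
  thus ?thesis using assms by simp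
qed

lemma cross:
  assumes "\<forall>s>n. coeff v s = 0"
  shows "Q0 m c n (u + v) = Q0 m c n u + Q0 m c n v + Xf m c n u v"
proof -
  have e0: "(\<Sum>i=j..n. coeff (u+v) i * coeff (u+v) (i - j)) =
     (\<Sum>i=j..n. coeff u i * coeff u (i - j)) + (\<Sum>i=j..n. coeff v i * coeff v (i - j))
     + ((\<Sum>i=j..n. coeff u i * coeff v (i - j)) + (\<Sum>i=j..n. coeff v i * coeff u (i - j)))" for j
    unfolding sum.distrib[symmetric] coeff_add by (intro sum.cong refl) (simp add: algebra_simps)
  have e1: "(\<Sum>i=j..n. coeff (u+v) i * coeff (u+v) (i - j)) =
     (\<Sum>i=j..n. coeff u i * coeff u (i - j)) + (\<Sum>i=j..n. coeff v i * coeff v (i - j))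
     + ((\<Sum>i\<le>n. if j \<le> i then coeff u i * coeff v (i - j) else 0) + (\<Sum>i\<le>n. coeff u i * coeff v (i+j)))" for j
    unfolding e0 aux1[where j=j and n=n and a="\<lambda>i. coeff u i * coeff v (i - j)"] 
       aux2[where n=n and b="coeff v" and j=j and a="coeff u", OF assms] ..
  have "Xf m c n u v = (\<Sum>i\<le>n. \<Sum>j\<le>m. c j * ((if j \<le> i then coeff u i * coeff v (i - j) else 0) + coeff u i * coeff v (i+j)))"
    unfolding Xf_def coeff_Bp_mult sum_distrib_left
    by (intro sum.cong refl) (simp add: algebra_simps)
  also have "\<dots> = (\<Sum>j\<le>m. \<Sum>i\<le>n. c j * ((if j \<le> i then coeff u i * coeff v (i - j) else 0) + coeff u i * coeff v (i+j)))"
    by (rule sum.swap)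
  also have "\<dots> = (\<Sum>j\<le>m. c j * ((\<Sum>i\<le>n. if j \<le> i then coeff u i * coeff v (i - j) else 0) + (\<Sum>i\<le>n. coeff u i * coeff v (i+j))))"
    by (simp only: sum_distrib_left sum.distrib distrib_left)
  finally have x: "Xf m c n u v = \<dots>" .
  show ?thesis unfolding Q0_def e1 x by (simp only: distrib_left sum.distrib)
qed

lemma Pset_deg:
  assumes "x \<in> Pset N" "x \<noteq> 0" shows "degree x < N"
proof (rule ccontr)
  assume "\<not> degree x < N"
  hence "coeff x (degree x) = 0" using assms(1) unfolding Pset_def by simp
  thus False using assms(2) by simp
qed

lemma Pset_0[simp]: "0 \<in> Pset N" unfolding Pset_def by simp
lemma Pset_add: "x \<in> Pset N \<Longrightarrow> y \<in> Pset N \<Longrightarrow> x + y \<in> Pset N" unfolding Pset_def by simp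
lemma Pset_diff: "x \<in> Pset N \<Longrightarrow> y \<in> Pset N \<Longrightarrow> x - y \<in> Pset N" unfolding Pset_def by simp
lemma Pset_smult: "x \<in> Pset N \<Longrightarrow> smult a x \<in> Pset N" unfolding Pset_def by simp

lemma Pset_mult:
  fixes g x :: "'a::field poly"
  assumes "x \<in> Pset N" "degree g \<le> k"
  shows "g * x \<in> Pset (N + k)"
proof (cases "x = 0")
  case True thus ?thesis by simp
next
  case False
  hence "degree x < N" using Pset_deg assms by blast
  hence "degree (g * x) < N + k" using degree_mult_le[of g x] assms(2) by linarith
  thus ?thesis unfolding Pset_def by (auto intro: coeff_eq_0)
qed

lemma card_restrict_bound:
  fixes f :: "'b \<Rightarrow> nat \<Rightarrow> 'a::finite"
  assumes "inj_on (\<lambda>x. restrict (f x) I) A" "finite I"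
  shows "finite A \<and> card A \<le> CARD('a) ^ card I"
proof -
  have sub: "(\<lambda>x. restrict (f x) I) ` A \<subseteq> I \<rightarrow>\<^sub>E (UNIV :: 'a set)" by auto
  have fin: "finite (I \<rightarrow>\<^sub>E (UNIV :: 'a set))" using assms(2) by (simp add: finite_PiE)
  have cardP: "card (I \<rightarrow>\<^sub>E (UNIV :: 'a set)) = CARD('a) ^ card I"
    using assms(2) by (simp add: card_PiE)
  have "finite A" using inj_on_finite[OF assms(1) sub fin] .
  moreover have "card A \<le> card (I \<rightarrow>\<^sub>E (UNIV :: 'a set))"
    using card_inj_on_le[OF assms(1) sub fin] .
  ultimately show ?thesis using cardP by simp
qed

lemma Pset_card: "finite (Pset N :: 'a::{finite,field} poly set) \<and> card (Pset N :: 'a poly set) \<le> CARD('a) ^ N"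
proof -
  have "inj_on (\<lambda>x. restrict (coeff x) {..<N}) (Pset N :: 'a poly set)"
  proof (rule inj_onI)
    fix x y :: "'a poly" assume "x \<in> Pset N" "y \<in> Pset N" "restrict (coeff x) {..<N} = restrict (coeff y) {..<N}"
    note h = this
    show "x = y" unfolding poly_eq_iff
    proof
      fix i show "coeff x i = coeff y i"
      proof (cases "i < N")
        case True
        thus ?thesis using fun_cong[OF h(3), of i] by simp
      next
        case False
        thus ?thesis using h(1,2) unfolding Pset_def by simp
      qed
    qed
  qed
  from card_restrict_bound[OF this] show ?thesis by simp
qed

lemma monics_eq: "monics N = (\<lambda>x. monom 1 N + x) ` (Pset N :: 'a::field poly set)"
proof (intro set_eqI iffI)
  fix h :: "'a poly" assume h: "h \<in> monics N"
  have "h - monom 1 N \<in> Pset N" unfolding Pset_def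
  proof (safe)
    fix i assume "N \<le> i"
    thus "coeff (h - monom 1 N) i = 0" using h unfolding monics_def
      by (cases "i = N") (auto simp: coeff_monom intro: coeff_eq_0)
  qed
  moreover have "h = monom 1 N + (h - monom 1 N)" by simp
  ultimately show "h \<in> (\<lambda>x. monom 1 N + x) ` Pset N" by blast
next
  fix h :: "'a poly" assume "h \<in> (\<lambda>x. monom 1 N + x) ` Pset N"
  then obtain x where x: "x \<in> Pset N" and hx: "h = monom 1 N + x" by blast
  have cN: "coeff h N = 1" using x unfolding hx Pset_def by simp
  have "degree h \<le> N"
    by (rule degree_le) (use x in \<open>auto simp: hx Pset_def coeff_monom\<close>)
  moreover have "N \<le> degree h" using cN by (intro le_degree) simp
  ultimately have "degree h = N" by simp
  thus "h \<in> monics N" unfolding monics_def using cN by simp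
qed

lemma monics_inj: "inj_on (\<lambda>x. monom 1 N + x) (Pset N :: 'a::field poly set)"
  by (rule inj_onI) simp

lemma monics_card: "finite (monics N :: 'a::{finite,field} poly set) \<and> card (monics N :: 'a poly set) \<le> CARD('a) ^ N"
  using Pset_card[where N=N, where 'a='a] card_image[OF monics_inj[where N=N, where 'a='a]]
  unfolding monics_eq by simp

lemma monics_mult: "g \<in> monics k \<Longrightarrow> h \<in> monics N \<Longrightarrow> g * h \<in> monics (k + N)"
  unfolding monics_def by (auto simp: lead_coeff_mult intro!: degree_mult_eq)

lemma char_sum_lin:
  fixes \<psi> :: "'a::{finite,field} \<Rightarrow> complex" and P :: "'a poly set" and L :: "'a poly \<Rightarrow> 'a"
  assumes nt: "nontriv_add_char \<psi>" and p0: "\<psi> 0 = 1"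
    and cl_add: "\<And>x y. x \<in> P \<Longrightarrow> y \<in> P \<Longrightarrow> x + y \<in> P"
    and cl_diff: "\<And>x y. x \<in> P \<Longrightarrow> y \<in> P \<Longrightarrow> x - y \<in> P"
    and cl_sm: "\<And>a x. x \<in> P \<Longrightarrow> smult a x \<in> P"
    and ladd: "\<And>x y. x \<in> P \<Longrightarrow> y \<in> P \<Longrightarrow> L (x + y) = L x + L y"
    and lsm: "\<And>a x. x \<in> P \<Longrightarrow> L (smult a x) = a * L x"
  shows "(\<Sum>y\<in>P. \<psi> (L y)) = (if \<forall>y\<in>P. L y = 0 then of_nat (card P) else 0)"
proof (cases "\<forall>y\<in>P. L y = 0")
  case True then show ?thesis using p0 by simp
next
  case False
  then obtain y0 where y0: "y0 \<in> P" "L y0 \<noteq> 0" by blast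
  obtain a0 where a0: "\<psi> a0 \<noteq> 1" using nt unfolding nontriv_add_char_def by blast
  define y1 where "y1 = smult (a0 / L y0) y0"
  have y1P: "y1 \<in> P" using cl_sm y0 unfolding y1_def by blast
  have Ly1: "L y1 = a0" using lsm[OF y0(1)] y0(2) unfolding y1_def by simp
  have bij: "bij_betw (\<lambda>y. y + y1) P P"
    by (rule bij_betw_byWitness[where f'="\<lambda>y. y - y1"]) (use cl_add cl_diff y1P in auto)
  have "(\<Sum>y\<in>P. \<psi> (L y)) = (\<Sum>y\<in>P. \<psi> (L (y + y1)))"
    using sum.reindex_bij_betw[OF bij, of "\<lambda>y. \<psi> (L y)"] by simp
  also have "\<dots> = (\<Sum>y\<in>P. \<psi> (L y) * \<psi> a0)"
    by (intro sum.cong refl) (simp add: ladd y1P Ly1 psi_props(3)[OF nt p0])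
  also have "\<dots> = (\<Sum>y\<in>P. \<psi> (L y)) * \<psi> a0" by (simp add: sum_distrib_right)
  finally have "(\<Sum>y\<in>P. \<psi> (L y)) * (\<psi> a0 - 1) = 0" by (simp add: algebra_simps)
  hence "(\<Sum>y\<in>P. \<psi> (L y)) = 0" using a0 by simp
  thus ?thesis using False by (subst if_not_P) auto
qed

lemma Bp_Pset: "Bp m c \<in> Pset (2 * m + 1)"
  unfolding Pset_def Bp_def by (auto simp: coeff_sum intro!: sum.neutral)

lemma W_bound:
  fixes g :: "'a::{finite,field} poly"
  assumes Bnz: "Bp m c \<noteq> 0" and g: "g \<in> monics k" and kn: "k \<le> n"
  shows "finite {z \<in> Pset (n-k). \<forall>y\<in>Pset (n-k). Xf m c n (g*y) (g*z) = 0} \<and>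
         card {z \<in> Pset (n-k). \<forall>y\<in>Pset (n-k). Xf m c n (g*y) (g*z) = 0} \<le> CARD('a) ^ (k + 2*m + 1)"
proof -
  define N where "N = n - k"
  define P where "P = (Pset N :: 'a poly set)"
  define W where "W = {z \<in> P. \<forall>y\<in>P. Xf m c n (g*y) (g*z) = 0}"
  define I where "I = {..<m+k} \<union> {n+m..n+2*m}"
  have gdeg: "degree g = k" and g1: "lead_coeff g = 1" using g unfolding monics_def by auto
  have gnz: "g \<noteq> 0" using g1 by auto
  have finI: "finite I" unfolding I_def by simp
  have cardI: "card I \<le> k + 2*m + 1"
  proof -
    have "card I \<le> card {..<m+k} + card {n+m..n+2*m}" unfolding I_def by (rule card_Un_le)
    thus ?thesis by simp
  qed
  have Xf_diff: "Xf m c n u (v1 - v2) = Xf m c n u v1 - Xf m c n u v2" for u v1 v2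
    unfolding Xf_def by (simp add: right_diff_distrib sum_subtractf algebra_simps)
  have Bdeg: "degree (Bp m c) \<le> 2 * m" using Pset_deg[OF Bp_Pset Bnz] by simp
  have key: "d = 0" if dP: "d \<in> P" and dW: "\<forall>y\<in>P. Xf m c n (g*y) (g*d) = 0"
     and dI: "\<forall>i\<in>I. coeff (Bp m c * (g*d)) i = 0" for d
  proof -
    define R where "R = Bp m c * (g * d)"
    have gdP: "g * d \<in> Pset n" using Pset_mult[OF dP[unfolded P_def] order.refl[of "degree g"]] kn gdeg
      unfolding N_def by simp
    have RP: "R \<in> Pset (n + 2 * m)" using Pset_mult[OF gdP Bdeg] unfolding R_def by (simp add: mult.commute)
    have w: "coeff R (i + m) = 0" if "i \<le> n" for i
      using that
    proof (induction i rule: less_induct)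
      case (less i)
      show ?case
      proof (cases "i < k \<or> i = n")
        case True
        hence "i + m \<in> I" unfolding I_def by auto
        thus ?thesis using dI unfolding R_def by blast
      next
        case False
        hence ki: "k \<le> i" "i < n" using less.prems by auto
        define r where "r = i - k"
        have rP: "monom 1 r \<in> P" unfolding P_def Pset_def N_def r_def using ki by auto
        have "0 = Xf m c n (g * monom 1 r) (g * d)" using dW rP by simp
        also have "\<dots> = (\<Sum>s\<le>n. if s = i then coeff R (i + m) else 0)"
          unfolding Xf_def R_def[symmetric]
        proof (intro sum.cong refl)
          fix s assume s: "s \<in> {..n}"
          have cg: "coeff (g * monom 1 r) s = (if s < r then 0 else coeff g (s - r))"
            by (simp add: mult.commute[of g] coeff_monom_mult)
          show "coeff (g * monom 1 r) s * coeff R (s + m) = (if s = i then coeff R (i + m) else 0)"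
          proof (cases "s < i")
            case True
            thus ?thesis using less.IH[of s] s by simp
          next
            case False
            show ?thesis
            proof (cases "s = i")
              case True
              thus ?thesis using cg ki g1 gdeg unfolding r_def by simp
            next
              case False
              hence "s - r > degree g" using \<open>\<not> s < i\<close> ki gdeg unfolding r_def by simp
              hence "coeff g (s - r) = 0" by (rule coeff_eq_0)
              thus ?thesis using cg False \<open>\<not> s < i\<close> ki unfolding r_def by simp
            qed
          qed
        qed
        also have "\<dots> = coeff R (i + m)" using less.prems by simp
        finally show ?thesis by simp
      qed
    qed
    have "coeff R j = 0" for j
    proof -
      consider "j < m" | "m \<le> j \<and> j \<le> n + m" | "n + m \<le> j \<and> j \<le> n + 2 * m" | "n + 2 * m < j" by linarith
      thus ?thesis
      proof cases
        case 1 hence "j \<in> I" unfolding I_def by auto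
        thus ?thesis using dI unfolding R_def by blast
      next
        case 2
        hence "j - m + m = j" "j - m \<le> n" by arith+
        thus ?thesis using w[of "j - m"] by simp
      next
        case 3 hence "j \<in> I" unfolding I_def by auto
        thus ?thesis using dI unfolding R_def by blast
      next
        case 4 thus ?thesis using RP unfolding Pset_def by simp
      qed
    qed
    hence "R = 0" by (simp add: poly_eq_iff)
    thus "d = 0" using Bnz gnz unfolding R_def by simp
  qed
  have inj: "inj_on (\<lambda>z. restrict (coeff (Bp m c * (g * z))) I) W"
  proof (rule inj_onI)
    fix z1 z2 assume z1: "z1 \<in> W" and z2: "z2 \<in> W"
      and eq: "restrict (coeff (Bp m c * (g * z1))) I = restrict (coeff (Bp m c * (g * z2))) I"
    have "z1 - z2 = 0"
    proof (rule key)
      show "z1 - z2 \<in> P" using z1 z2 unfolding W_def P_def by (auto intro: Pset_diff)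
      show "\<forall>y\<in>P. Xf m c n (g*y) (g*(z1 - z2)) = 0"
        using z1 z2 unfolding W_def by (simp add: right_diff_distrib Xf_diff)
      show "\<forall>i\<in>I. coeff (Bp m c * (g*(z1 - z2))) i = 0"
      proof
        fix i assume "i \<in> I"
        thus "coeff (Bp m c * (g*(z1 - z2))) i = 0" using fun_cong[OF eq, of i]
          by (simp add: right_diff_distrib)
      qed
    qed
    thus "z1 = z2" by simp
  qed
  have "finite W \<and> card W \<le> CARD('a) ^ card I" by (rule card_restrict_bound[OF inj finI])
  moreover have "CARD('a) ^ card I \<le> CARD('a) ^ (k + 2*m + 1)"
    by (rule power_increasing[OF cardI]) simp
  ultimately show ?thesis unfolding W_def P_def N_def by auto
qed

lemma Bp_nz:
  fixes c :: "nat \<Rightarrow> 'a::field"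
  assumes "c m \<noteq> 0" "(2::'a) \<noteq> 0" shows "Bp m c \<noteq> 0"
proof (cases "m = 0")
  case True
  have "coeff (Bp m c) 0 = c 0 * (1 + 1)" unfolding Bp_def True coeff_sum coeff_smult coeff_add coeff_monom by simp
  thus ?thesis using assms True by auto
next
  case False
  have "coeff (Bp m c) (2*m) = (\<Sum>j\<le>m. coeff (smult (c j) (monom 1 (m - j) + monom 1 (m + j))) (2*m))"
    unfolding Bp_def by (simp only: coeff_sum)
  also have "\<dots> = (\<Sum>j\<le>m. if j = m then c m else 0)"
    by (intro sum.cong refl) (use False in auto)
  also have "\<dots> = c m" by simp
  finally show ?thesis using assms by auto
qed

lemma S_bound:
  fixes \<psi> :: "'a::{finite,field} \<Rightarrow> complex" and c :: "nat \<Rightarrow> 'a" and g :: "'a poly"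
  assumes nt: "nontriv_add_char \<psi>" and p0: "\<psi> 0 = 1" and Bnz: "Bp m c \<noteq> 0"
    and g: "g \<in> monics k" and kn: "k \<le> n"
  shows "norm (\<Sum>h\<in>monics (n-k). \<psi> (QA m c l (g*h))) ^ 2 \<le> real (CARD('a)) ^ (n + 2*m + 1)"
proof -
  define N where "N = n - k"
  define P where "P = (Pset N :: 'a poly set)"
  define G where "G = g * monom 1 N"
  define F where "F x = QA m c l (g * (monom 1 N + x))" for x
  define X where "X y z = Xf m c n (g*y) (g*z)" for y z
  define \<phi> where "\<phi> z = Q0 m c n (g*z) + Xf m c n G (g*z) + Lf l n (g*z)" for z
  define S where "S = (\<Sum>h\<in>monics N. \<psi> (QA m c l (g*h)))"
  define W where "W = {z \<in> P. \<forall>y\<in>P. X y z = 0}"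
  have gdeg: "degree g = k" using g unfolding monics_def by auto
  have Nk: "N + k = n" "k + N = n" unfolding N_def using kn by auto
  have finP: "finite P" and cardP: "card P \<le> CARD('a) ^ N" using Pset_card[where N=N, where 'a='a] unfolding P_def by auto
  have finW: "finite W" and cardW: "card W \<le> CARD('a) ^ (k + 2*m + 1)"
    using W_bound[OF Bnz g kn] unfolding W_def P_def N_def X_def by auto
  have S_eq: "S = (\<Sum>x\<in>P. \<psi> (F x))"
    unfolding S_def monics_eq P_def F_def by (simp add: sum.reindex[OF monics_inj])
  have Lf_add: "Lf l n (a + b) = Lf l n a + Lf l n b" for a b
    unfolding Lf_def by (simp add: algebra_simps sum.distrib)
  have Xf_addl: "Xf m c n (a + b) v = Xf m c n a v + Xf m c n b v" for a b v
    unfolding Xf_def by (simp add: algebra_simps sum.distrib)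
  have Xf_sm: "Xf m c n (smult a u) v = a * Xf m c n u v" for a u v
    unfolding Xf_def by (simp add: sum_distrib_left mult.assoc)
  have gP: "g * x \<in> Pset n" if "x \<in> P" for x
    using Pset_mult[OF that[unfolded P_def] order.refl[of "degree g"]] gdeg Nk by simp
  have Fx: "F x = Q0 m c n (G + g*x) + Lf l n (G + g*x)" if "x \<in> P" for x
  proof -
    have "monom 1 N + x \<in> monics N" using that unfolding P_def monics_eq by blast
    hence "g * (monom 1 N + x) \<in> monics n" using monics_mult[OF g] Nk by metis
    hence "degree (g * (monom 1 N + x)) = n" unfolding monics_def by simp
    moreover have "g * (monom 1 N + x) = G + g * x" unfolding G_def by (simp add: distrib_left)
    ultimately show ?thesis unfolding F_def by (simp add: QA_split)
  qed
  have Fdiff: "F (y + z) - F y = \<phi> z + X y z" if y: "y \<in> P" and z: "z \<in> P" for y z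
  proof -
    have yz: "y + z \<in> P" using y z unfolding P_def by (rule Pset_add)
    have e: "G + g * (y + z) = (G + g * y) + g * z" by (simp add: distrib_left add.assoc)
    have cz: "\<forall>s>n. coeff (g * z) s = 0" using gP[OF z] unfolding Pset_def by simp
    have "F (y + z) = Q0 m c n ((G + g * y) + g * z) + Lf l n ((G + g * y) + g * z)"
      using Fx[OF yz] e by simp
    also have "\<dots> = Q0 m c n (G + g * y) + Q0 m c n (g * z) + Xf m c n G (g * z) + Xf m c n (g * y) (g * z)
         + Lf l n (G + g * y) + Lf l n (g * z)"
      by (simp add: cross[OF cz] Xf_addl Lf_add)
    finally show ?thesis using Fx[OF y] unfolding \<phi>_def X_def by (simp add: algebra_simps)
  qed
  have padd: "\<psi> (a + b) = \<psi> a * \<psi> b" for a b using psi_props(3)[OF nt p0] .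
  have inner: "(\<Sum>y\<in>P. \<psi> (X y z)) = (if \<forall>y\<in>P. X y z = 0 then of_nat (card P) else 0)" for z
  proof (rule char_sum_lin[OF nt p0])
    show "\<And>x y. x \<in> P \<Longrightarrow> y \<in> P \<Longrightarrow> x + y \<in> P" unfolding P_def by (rule Pset_add)
    show "\<And>x y. x \<in> P \<Longrightarrow> y \<in> P \<Longrightarrow> x - y \<in> P" unfolding P_def by (rule Pset_diff)
    show "\<And>a x. x \<in> P \<Longrightarrow> smult a x \<in> P" unfolding P_def by (rule Pset_smult)
    show "\<And>x y. x \<in> P \<Longrightarrow> y \<in> P \<Longrightarrow> X (x + y) z = X x z + X y z"
      unfolding X_def by (simp add: distrib_left Xf_addl)
    show "\<And>a x. x \<in> P \<Longrightarrow> X (smult a x) z = a * X x z"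
      unfolding X_def by (simp add: Xf_sm)
  qed
  have shift: "(\<Sum>x\<in>P. \<psi> (F x - F y)) = (\<Sum>z\<in>P. \<psi> (F (y + z) - F y))" if y: "y \<in> P" for y
  proof -
    have bij: "bij_betw (\<lambda>z. y + z) P P"
      by (rule bij_betw_byWitness[where f'="\<lambda>x. x - y"])
         (use y in \<open>auto simp: P_def intro: Pset_add Pset_diff\<close>)
    show ?thesis using sum.reindex_bij_betw[OF bij, of "\<lambda>x. \<psi> (F x - F y)"] by simp
  qed
  have "complex_of_real (norm S ^ 2) = S * cnj S" by (rule complex_norm_square)
  also have "\<dots> = (\<Sum>x\<in>P. \<Sum>y\<in>P. \<psi> (F x - F y))"
    unfolding S_eq cnj_sum sum_product
    by (intro sum.cong refl) (simp add: psi_props(2)[OF nt p0] padd[symmetric])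
  also have "\<dots> = (\<Sum>y\<in>P. \<Sum>x\<in>P. \<psi> (F x - F y))" by (rule sum.swap)
  also have "\<dots> = (\<Sum>y\<in>P. \<Sum>z\<in>P. \<psi> (F (y + z) - F y))"
    by (rule sum.cong[OF refl]) (rule shift)
  also have "\<dots> = (\<Sum>y\<in>P. \<Sum>z\<in>P. \<psi> (\<phi> z) * \<psi> (X y z))"
    by (intro sum.cong refl) (simp add: Fdiff padd)
  also have "\<dots> = (\<Sum>z\<in>P. \<psi> (\<phi> z) * (\<Sum>y\<in>P. \<psi> (X y z)))"
    by (subst sum.swap) (simp add: sum_distrib_left)
  also have "\<dots> = (\<Sum>z\<in>P. \<psi> (\<phi> z) * (if \<forall>y\<in>P. X y z = 0 then of_nat (card P) else 0))"
    by (simp add: inner)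
  finally have eq: "complex_of_real (norm S ^ 2) = \<dots>" .
  have "norm (complex_of_real (norm S ^ 2)) = norm S ^ 2" by (simp only: norm_of_real) simp
  hence "norm S ^ 2 = norm (complex_of_real (norm S ^ 2))" by simp
  also have "\<dots> \<le> (\<Sum>z\<in>P. norm (\<psi> (\<phi> z) * (if \<forall>y\<in>P. X y z = 0 then of_nat (card P) else (0::complex))))"
    unfolding eq by (rule norm_sum)
  also have "\<dots> = (\<Sum>z\<in>P. if \<forall>y\<in>P. X y z = 0 then real (card P) else 0)"
    by (intro sum.cong refl) (simp add: norm_mult psi_props(1)[OF nt p0])
  also have "\<dots> = (\<Sum>z\<in>W. real (card P))"
    unfolding W_def by (rule sum.inter_filter[symmetric]) (rule finP)
  also have "\<dots> = real (card W) * real (card P)" by simp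
  also have "\<dots> \<le> real (CARD('a) ^ (k + 2*m + 1)) * real (CARD('a) ^ N)"
  proof (rule mult_mono)
    show "real (card W) \<le> real (CARD('a) ^ (k + 2*m + 1))" using cardW by (simp only: of_nat_le_iff)
    show "real (card P) \<le> real (CARD('a) ^ N)" using cardP by (simp only: of_nat_le_iff)
  qed simp_all
  also have "\<dots> = real (CARD('a)) ^ (k + 2*m + 1 + N)"
    by (simp add: power_add)
  also have "k + 2*m + 1 + N = n + 2*m + 1" using Nk by simp
  finally show ?thesis unfolding S_def N_def .
qed

theorem proposition7p2:
  fixes c :: "nat \<Rightarrow> 'a::{finite,field}" and m :: nat and C :: real
  assumes "odd CARD('a)" and "c m \<noteq> 0" and "C \<ge> 0"
  shows "\<exists>K::real. \<exists>\<epsilon>::nat \<Rightarrow> real. \<exists>N0::nat. \<epsilon> \<longlonglongrightarrow> 0 \<and>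
    (\<forall>(l :: nat \<Rightarrow> nat \<Rightarrow> 'a) (\<psi> :: 'a \<Rightarrow> complex) n k.
       nontriv_add_char \<psi> \<longrightarrow> n \<ge> N0 \<longrightarrow> k \<le> n \<longrightarrow> real k \<le> 9 * real n / 20 + C \<longrightarrow>
       Tk m c l \<psi> n k \<le> K * real CARD('a) powr (19 * real n / 20 + \<epsilon> n * real n))"
proof -
  define q where "q = real CARD('a)"
  have q1: "q \<ge> 1" unfolding q_def by simp
  have q0: "q > 0" using q1 by simp
  have Bnz: "Bp m c \<noteq> 0" using Bp_nz[where m=m and c=c, OF assms(2) two_nz[OF assms(1)]] .
  define K where "K = q powr (C + real m + 1/2)"
  have main: "Tk m c l \<psi> n k \<le> K * q powr (19 * real n / 20 + 0 * real n)"
    if nt: "nontriv_add_char \<psi>" and kn: "k \<le> n" and kC: "real k \<le> 9 * real n / 20 + C"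
    for l :: "nat \<Rightarrow> nat \<Rightarrow> 'a" and \<psi> :: "'a \<Rightarrow> complex" and n k
  proof -
    have padd: "\<psi> (x + y) = \<psi> x * \<psi> y" for x y using nt unfolding nontriv_add_char_def by blast
    have RHS0: "0 \<le> K * q powr (19 * real n / 20 + 0 * real n)" unfolding K_def by simp
    show ?thesis
    proof (cases "\<psi> 0 = 0")
      case True
      have "\<psi> x = 0" for x using padd[of x 0] True by simp
      hence "Tk m c l \<psi> n k = 0" unfolding Tk_def by simp
      thus ?thesis using RHS0 by simp
    next
      case False
      have "\<psi> 0 = \<psi> 0 * \<psi> 0" using padd[of 0 0] by simp
      hence p0: "\<psi> 0 = 1" using False by simp
      define Y where "Y = q powr ((real n + 2 * real m + 1) / 2)"
      have Y0: "Y \<ge> 0" unfolding Y_def by simp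
      have bound: "norm (\<Sum>h\<in>monics (n-k). \<psi> (QA m c l (g*h))) \<le> Y" if g: "g \<in> monics k" for g
      proof (rule power2_le_imp_le[OF _ Y0])
        have "Y ^ 2 = q powr ((real n + 2 * real m + 1) / 2 + (real n + 2 * real m + 1) / 2)"
          unfolding Y_def power2_eq_square by (simp only: powr_add)
        also have "\<dots> = q powr (real (n + 2 * m + 1))" by (simp add: add_ac)
        also have "\<dots> = q ^ (n + 2 * m + 1)" using q0 by (rule powr_realpow)
        finally have "Y ^ 2 = q ^ (n + 2 * m + 1)" .
        thus "norm (\<Sum>h\<in>monics (n-k). \<psi> (QA m c l (g*h))) ^ 2 \<le> Y ^ 2"
          using S_bound[OF nt p0 Bnz g kn, of l] unfolding q_def by simp
      qed
      have fin: "finite (monics k :: 'a poly set)" and cardM: "card (monics k :: 'a poly set) \<le> CARD('a) ^ k"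
        using monics_card[where N=k, where 'a='a] by auto
      have "Tk m c l \<psi> n k \<le> real (card (monics k :: 'a poly set)) * Y"
        unfolding Tk_def using bound by (intro sum_bounded_above) auto
      also have "\<dots> \<le> q ^ k * Y"
      proof (rule mult_right_mono[OF _ Y0])
        show "real (card (monics k :: 'a poly set)) \<le> q ^ k"
          using cardM unfolding q_def by (metis of_nat_le_iff of_nat_power)
      qed
      also have "\<dots> = q powr (real k + (real n + 2 * real m + 1) / 2)"
        unfolding Y_def using q0 by (simp add: powr_add powr_realpow)
      also have "\<dots> \<le> q powr ((C + real m + 1/2) + (19 * real n / 20 + 0 * real n))"
        by (rule powr_mono[OF _ q1]) (use kC in \<open>simp add: field_simps\<close>)
      also have "\<dots> = K * q powr (19 * real n / 20 + 0 * real n)"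
        unfolding K_def by (rule powr_add)
      finally show ?thesis .
    qed
  qed
  show ?thesis
    apply (rule exI[of _ K], rule exI[of _ "\<lambda>_. 0"], rule exI[of _ 0])
    using main unfolding q_def by auto
qed

end
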